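(* Let $d\ge 2$ and let $\rho$ be a density matrix on $\mathbb{C}^d$ with entries $\rho_{jk}=\langle j|\rho|k\rangle$, $j,k\in\{0,\dots,d-1\}$, in the computational basis. Then $$F_c(\rho)=\frac{1}{d}+\frac{1}{d}\,C_{l_1}(\rho)$$ if and only if one can choose arguments $\theta_{jk}\in[0,2\pi]$ of the entries (i.e. $\rho_{jk}=|\rho_{jk}|e^{\mathfrak{i}\theta_{jk}}$, with $\theta_{jk}$ arbitrary when $\rho_{jk}=0$) such that for all $j,p,k\in\{0,\dots,d-1\}$ there is an integer $n$ with $$\theta_{jp}+\theta_{pk}=2n\pi+\theta_{jk}.$$
   Context: Coherence is taken with respect to the computational basis $\{|0\rangle,\dots,|d-1\rangle\}$. The $l_1$-norm coherence is $C_{l_1}(\rho)=\sum_{j\neq k}|\langle j|\rho|k\rangle|$. The set of maximally coherent states is $\mathcal{M}=\{|\phi\rangle=\frac{1}{\sqrt d}\sum_{j=0}^{d-1}e^{\mathfrak{i}\theta_j}|j\rangle:\theta_j\in[0,2\pi]\}$. The coherence fraction of a state $\rho$ is $F_c(\rho)=\max_{|\phi\rangle\in\mathcal{M}}\langle\phi|\rho|\phi\rangle$. *)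

theory Defs
  imports "HOL-Analysis.Analysis"
begin

text \<open>A d x d complex matrix is represented as a function nat => nat => complex,
  only entries with indices below d being relevant (computational basis |0>,...,|d-1>).
  Vectors in C^d are functions nat => complex, only indices below d relevant.\<close>

definition density_matrix :: "nat \<Rightarrow> (nat \<Rightarrow> nat \<Rightarrow> complex) \<Rightarrow> bool" where
  "density_matrix d \<rho> \<longleftrightarrow>
     (\<forall>j<d. \<forall>k<d. \<rho> k j = cnj (\<rho> j k)) \<and>
     (\<forall>v :: nat \<Rightarrow> complex. 0 \<le> Re (\<Sum>j<d. \<Sum>k<d. cnj (v j) * \<rho> j k * v k)) \<and>
     (\<Sum>j<d. \<rho> j j) = 1"

definition expval :: "nat \<Rightarrow> (nat \<Rightarrow> nat \<Rightarrow> complex) \<Rightarrow> (nat \<Rightarrow> complex) \<Rightarrow> complex" where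
  "expval d \<rho> \<phi> = (\<Sum>j<d. \<Sum>k<d. cnj (\<phi> j) * \<rho> j k * \<phi> k)"

definition C_l1 :: "nat \<Rightarrow> (nat \<Rightarrow> nat \<Rightarrow> complex) \<Rightarrow> real" where
  "C_l1 d \<rho> = (\<Sum>j<d. \<Sum>k<d. if j \<noteq> k then cmod (\<rho> j k) else 0)"

definition max_coherent :: "nat \<Rightarrow> (nat \<Rightarrow> complex) set" where
  "max_coherent d = {\<phi>. \<exists>\<theta> :: nat \<Rightarrow> real. (\<forall>j<d. 0 \<le> \<theta> j \<and> \<theta> j \<le> 2 * pi) \<and>
       (\<forall>j<d. \<phi> j = exp (\<i> * complex_of_real (\<theta> j)) / complex_of_real (sqrt (real d)))}"

text \<open>Coherence fraction: maximum (supremum, attained) of <phi|rho|phi> over maximally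
  coherent states; <phi|rho|phi> is real for Hermitian rho, so we take the real part.\<close>
definition coherence_fraction :: "nat \<Rightarrow> (nat \<Rightarrow> nat \<Rightarrow> complex) \<Rightarrow> real" where
  "coherence_fraction d \<rho> = (SUP \<phi>\<in>max_coherent d. Re (expval d \<rho> \<phi>))"

end

theory Submission
  imports Defs
begin

definition phs :: "nat \<Rightarrow> (nat \<Rightarrow> real) \<Rightarrow> nat \<Rightarrow> complex" where
  "phs d \<beta> = (\<lambda>j. exp (\<i> * complex_of_real (\<beta> j)) / complex_of_real (sqrt (real d)))"

lemma term_eq:
  assumes "d > 0"
  shows "cnj (phs d \<beta> j) * r * phs d \<beta> k = r * exp (\<i> * complex_of_real (\<beta> k - \<beta> j)) / of_real (real d)"
proof -
  have c: "cnj (exp (\<i> * complex_of_real x)) = exp (- (\<i> * complex_of_real x))" for x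
    by (simp add: exp_cnj)
  have s: "complex_of_real (sqrt (real d)) * complex_of_real (sqrt (real d)) = of_real (real d)"
    unfolding of_real_mult[symmetric] by simp
  have "cnj (phs d \<beta> j) * r * phs d \<beta> k = r * (exp (- (\<i> * complex_of_real (\<beta> j))) * exp (\<i> * complex_of_real (\<beta> k))) / (complex_of_real (sqrt (real d)) * complex_of_real (sqrt (real d)))"
    by (simp add: phs_def c)
  also have "exp (- (\<i> * complex_of_real (\<beta> j))) * exp (\<i> * complex_of_real (\<beta> k)) = exp (\<i> * complex_of_real (\<beta> k - \<beta> j))"
    by (simp add: exp_add[symmetric] algebra_simps)
  finally show ?thesis using s by simp
qed

lemma F_eq:
  assumes "d > 0"
  shows "Re (expval d \<rho> (phs d \<beta>)) * real d = (\<Sum>j<d. \<Sum>k<d. Re (\<rho> j k * exp (\<i> * complex_of_real (\<beta> k - \<beta> j))))"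
proof -
  have "expval d \<rho> (phs d \<beta>) = (\<Sum>j<d. \<Sum>k<d. \<rho> j k * exp (\<i> * complex_of_real (\<beta> k - \<beta> j))) / of_real (real d)"
    unfolding expval_def using term_eq[OF assms] by (simp add: sum_divide_distrib)
  then have "Re (expval d \<rho> (phs d \<beta>)) = (\<Sum>j<d. \<Sum>k<d. Re (\<rho> j k * exp (\<i> * complex_of_real (\<beta> k - \<beta> j)))) / real d"
    by (simp add: Re_divide_of_real)
  then show ?thesis using assms by simp
qed

definition hh :: "(nat \<Rightarrow> nat \<Rightarrow> complex) \<Rightarrow> nat \<Rightarrow> nat \<Rightarrow> real" where
  "hh \<rho> j k = (if j = k then Re (\<rho> j k) else cmod (\<rho> j k))"

lemma sum_hh:
  assumes "(\<Sum>j<d. \<rho> j j) = 1"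
  shows "(\<Sum>j<d. \<Sum>k<d. hh \<rho> j k) = 1 + C_l1 d \<rho>"
proof -
  have "hh \<rho> j k = (if j = k then Re (\<rho> j k) else 0) + (if j \<noteq> k then cmod (\<rho> j k) else 0)" for j k
    by (simp add: hh_def)
  then have "(\<Sum>j<d. \<Sum>k<d. hh \<rho> j k) = (\<Sum>j<d. \<Sum>k<d. (if j = k then Re (\<rho> j k) else 0)) + C_l1 d \<rho>"
    by (simp add: sum.distrib C_l1_def)
  also have "(\<Sum>j<d. \<Sum>k<d. (if j = k then Re (\<rho> j k) else 0)) = (\<Sum>j<d. Re (\<rho> j j))"
    by (simp add: if_distrib cong: if_cong)
  also have "\<dots> = Re (\<Sum>j<d. \<rho> j j)" by simp
  finally show ?thesis using assms by simp
qed

lemma g_le_hh: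
  shows "Re (\<rho> j k * exp (\<i> * complex_of_real (\<beta> k - \<beta> j))) \<le> hh \<rho> j k"
proof (cases "j = k")
  case True then show ?thesis by (simp add: hh_def)
next
  case False
  have "Re (\<rho> j k * exp (\<i> * complex_of_real (\<beta> k - \<beta> j))) \<le> cmod (\<rho> j k * exp (\<i> * complex_of_real (\<beta> k - \<beta> j)))"
    by (rule complex_Re_le_cmod)
  also have "\<dots> = cmod (\<rho> j k)" by (simp add: norm_mult)
  finally show ?thesis using False by (simp add: hh_def)
qed

lemma K_compact:
  "compact (Pi UNIV (\<lambda>j::nat. if j < d then {0..2*pi} else {0::real}))"
proof -
  have "compactin (product_topology (\<lambda>i. euclidean) UNIV) (PiE UNIV (\<lambda>j::nat. if j < d then {0..2*pi} else {0::real}))"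
    by (subst compactin_PiE) auto
  then show ?thesis by (simp add: euclidean_product_topology PiE_UNIV_domain)
qed

lemma F_cont: "continuous_on S (\<lambda>\<beta>. Re (expval d \<rho> (phs d \<beta>)))"
  unfolding expval_def phs_def
  by (intro continuous_intros continuous_on_subset[OF continuous_on_product_coordinates]) auto

lemma re_cmod_real:
  fixes w :: complex
  assumes "Re w = cmod w"
  shows "w = complex_of_real (cmod w)"
proof -
  have "cmod w ^ 2 = Re w ^ 2 + Im w ^ 2" by (rule cmod_power2)
  then have "Im w = 0" using assms by simp
  then show ?thesis using assms by (simp add: complex_eq_iff)
qed

lemma exp_2npi: "exp (\<i> * complex_of_real (2 * real_of_int n * pi)) = 1"
proof -
  have "exp ((2 * of_int n * pi) * \<i>) = 1" by (rule exp_integer_2pi) simp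
  then show ?thesis by (simp add: mult.commute mult.left_commute)
qed

lemma exp_shift: "exp (\<i> * complex_of_real (x - 2 * pi * real_of_int m)) = exp (\<i> * complex_of_real x)"
proof -
  have "exp (\<i> * complex_of_real (x - 2 * pi * real_of_int m)) = exp (\<i> * complex_of_real x) * exp (\<i> * complex_of_real (2 * real_of_int (- m) * pi))"
    by (simp add: exp_add[symmetric] algebra_simps)
  then show ?thesis by (simp only: exp_2npi) simp
qed

lemma mod2pi_bounds:
  fixes x :: real
  shows "0 \<le> x - 2 * pi * real_of_int \<lfloor>x / (2 * pi)\<rfloor> \<and> x - 2 * pi * real_of_int \<lfloor>x / (2 * pi)\<rfloor> \<le> 2 * pi"
proof -
  have p: "2 * pi > 0" by simp
  have a: "real_of_int \<lfloor>x / (2 * pi)\<rfloor> \<le> x / (2 * pi)" by (rule of_int_floor_le)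
  have b: "x / (2 * pi) < real_of_int \<lfloor>x / (2 * pi)\<rfloor> + 1" by (rule real_of_int_floor_add_one_gt)
  have a': "2 * pi * real_of_int \<lfloor>x / (2 * pi)\<rfloor> \<le> x" using mult_left_mono[OF a, of "2*pi"] p by simp
  have b': "x < 2 * pi * (real_of_int \<lfloor>x / (2 * pi)\<rfloor> + 1)" using mult_strict_left_mono[OF b p] p by simp
  show ?thesis using a' b' by (simp add: algebra_simps)
qed


theorem theorem1:
  fixes d :: nat and \<rho> :: "nat \<Rightarrow> nat \<Rightarrow> complex"
  assumes "d \<ge> 2" and "density_matrix d \<rho>"
  shows "coherence_fraction d \<rho> = 1 / real d + C_l1 d \<rho> / real d \<longleftrightarrow>
    (\<exists>\<theta> :: nat \<Rightarrow> nat \<Rightarrow> real.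
       (\<forall>j<d. \<forall>k<d. 0 \<le> \<theta> j k \<and> \<theta> j k \<le> 2 * pi \<and>
            \<rho> j k = complex_of_real (cmod (\<rho> j k)) * exp (\<i> * complex_of_real (\<theta> j k))) \<and>
       (\<forall>j<d. \<forall>p<d. \<forall>k<d. \<exists>n :: int. \<theta> j p + \<theta> p k = 2 * real_of_int n * pi + \<theta> j k))"
proof -
  have d0: "d > 0" using assms(1) by simp
  have herm: "\<forall>j<d. \<forall>k<d. \<rho> k j = cnj (\<rho> j k)"
    and psd: "\<forall>v :: nat \<Rightarrow> complex. 0 \<le> Re (\<Sum>j<d. \<Sum>k<d. cnj (v j) * \<rho> j k * v k)"
    and tr: "(\<Sum>j<d. \<rho> j j) = 1"
    using assms(2) unfolding density_matrix_def by blast+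
  define B where "B = 1 / real d + C_l1 d \<rho> / real d"
  define F where "F = (\<lambda>\<beta>. Re (expval d \<rho> (phs d \<beta>)))"
  define g where "g = (\<lambda>\<beta> j k. Re (\<rho> j k * exp (\<i> * complex_of_real (\<beta> k - \<beta> j))))"
  have Fd: "F \<beta> * real d = (\<Sum>j<d. \<Sum>k<d. g \<beta> j k)" for \<beta>
    unfolding F_def g_def by (rule F_eq[OF d0])
  have sh: "(\<Sum>j<d. \<Sum>k<d. hh \<rho> j k) = 1 + C_l1 d \<rho>" by (rule sum_hh[of \<rho> d, OF tr])
  have Bd: "B * real d = 1 + C_l1 d \<rho>" unfolding B_def using d0 by (simp add: field_simps)
  have Fle: "F \<beta> \<le> B" for \<beta>
  proof -
    have "F \<beta> * real d \<le> B * real d"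
      unfolding Fd Bd sh[symmetric] g_def
      by (intro sum_mono g_le_hh)
    then show ?thesis using d0 by simp
  qed
  have mc: "\<exists>\<beta>. (\<forall>j<d. 0 \<le> \<beta> j \<and> \<beta> j \<le> 2 * pi) \<and> expval d \<rho> \<phi> = expval d \<rho> (phs d \<beta>)"
    if "\<phi> \<in> max_coherent d" for \<phi>
  proof -
    from that obtain \<beta> where b1: "\<forall>j<d. 0 \<le> \<beta> j \<and> \<beta> j \<le> 2 * pi"
      and b2: "\<forall>j<d. \<phi> j = exp (\<i> * complex_of_real (\<beta> j)) / complex_of_real (sqrt (real d))"
      unfolding max_coherent_def by blast
    have "expval d \<rho> \<phi> = expval d \<rho> (phs d \<beta>)"
      unfolding expval_def using b2 by (intro sum.cong refl) (simp add: phs_def)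
    then show ?thesis using b1 by blast
  qed
  have mc2: "phs d \<beta> \<in> max_coherent d" if "\<forall>j<d. 0 \<le> \<beta> j \<and> \<beta> j \<le> 2 * pi" for \<beta>
    using that unfolding max_coherent_def phs_def by blast
  have up: "Re (expval d \<rho> \<phi>) \<le> B" if "\<phi> \<in> max_coherent d" for \<phi>
    using mc[OF that] Fle unfolding F_def by metis
  have bdd: "bdd_above ((\<lambda>\<phi>. Re (expval d \<rho> \<phi>)) ` max_coherent d)"
    using up by (intro bdd_aboveI2) 
  have ne: "max_coherent d \<noteq> {}" using mc2[of "\<lambda>_. 0"] by auto
  have CFle: "coherence_fraction d \<rho> \<le> B"
    unfolding coherence_fraction_def by (rule cSUP_least[OF ne up])
  show ?thesis
  proof
    assume eq: "coherence_fraction d \<rho> = 1 / real d + C_l1 d \<rho> / real d"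
    define K where "K = Pi UNIV (\<lambda>j::nat. if j < d then {0..2*pi} else {0::real})"
    have K0: "(\<lambda>_. 0) \<in> K" unfolding K_def by auto
    obtain \<beta>0 where b0K: "\<beta>0 \<in> K" and b0max: "\<forall>y\<in>K. F y \<le> F \<beta>0"
      using continuous_attains_sup[OF K_compact[of d, folded K_def] _ F_cont[of K d \<rho>, folded F_def]] K0 by blast
    have b0r: "\<forall>j<d. 0 \<le> \<beta>0 j \<and> \<beta>0 j \<le> 2 * pi" using b0K unfolding K_def by (auto simp: Pi_def) (metis atLeastAtMost_iff)+
    have "coherence_fraction d \<rho> \<le> F \<beta>0"
      unfolding coherence_fraction_def
    proof (rule cSUP_least[OF ne])
      fix \<phi> assume "\<phi> \<in> max_coherent d"
      from mc[OF this] obtain \<beta> where b1: "\<forall>j<d. 0 \<le> \<beta> j \<and> \<beta> j \<le> 2 * pi"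
        and b2: "expval d \<rho> \<phi> = expval d \<rho> (phs d \<beta>)" by blast
      define \<beta>' where "\<beta>' = (\<lambda>j. if j < d then \<beta> j else 0)"
      have "\<beta>' \<in> K" unfolding K_def \<beta>'_def using b1 by auto
      have "expval d \<rho> (phs d \<beta>) = expval d \<rho> (phs d \<beta>')"
        unfolding expval_def by (intro sum.cong refl) (simp add: phs_def \<beta>'_def)
      then have "Re (expval d \<rho> \<phi>) = F \<beta>'" using b2 unfolding F_def by simp
      also have "\<dots> \<le> F \<beta>0" using b0max \<open>\<beta>' \<in> K\<close> by blast
      finally show "Re (expval d \<rho> \<phi>) \<le> F \<beta>0" .
    qed
    then have FB: "F \<beta>0 = B" using Fle[of \<beta>0] eq unfolding B_def by linarith
    have "(\<Sum>j<d. \<Sum>k<d. hh \<rho> j k - g \<beta>0 j k) = 0"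
      using Fd[of \<beta>0] FB Bd sh by (simp add: sum_subtractf)
    moreover have nn: "0 \<le> hh \<rho> j k - g \<beta>0 j k" for j k
      using g_le_hh[of \<rho> j k \<beta>0] unfolding g_def by simp
    ultimately have "\<forall>j\<in>{..<d}. (\<Sum>k<d. hh \<rho> j k - g \<beta>0 j k) = 0"
      by (subst sum_nonneg_eq_0_iff[symmetric]) (auto intro: sum_nonneg)
    then have geq: "g \<beta>0 j k = hh \<rho> j k" if "j < d" "k < d" for j k
      using that nn by (subst (asm) sum_nonneg_eq_0_iff) auto
    have rep: "\<rho> j k = complex_of_real (cmod (\<rho> j k)) * exp (\<i> * complex_of_real (\<beta>0 j - \<beta>0 k))"
      if jk: "j < d" "k < d" for j k
    proof (cases "j = k")
      case True
      have "\<rho> j j = cnj (\<rho> j j)" using herm jk by blast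
      have "Im (\<rho> j j) = Im (cnj (\<rho> j j))" using \<open>\<rho> j j = cnj (\<rho> j j)\<close> by (rule arg_cong)
      then have im: "Im (\<rho> j j) = 0" by simp
      define v where "v = (\<lambda>i::nat. if i = j then (1::complex) else 0)"
      have "(\<Sum>a<d. \<Sum>b<d. cnj (v a) * \<rho> a b * v b) = (\<Sum>a<d. \<Sum>b<d. if a = j then (if b = j then \<rho> a b else 0) else 0)"
        unfolding v_def by (intro sum.cong refl) auto
      also have "\<dots> = (\<Sum>a<d. if a = j then \<rho> j j else 0)"
        using jk by (intro sum.cong refl) auto
      also have "\<dots> = \<rho> j j" using jk by simp
      finally have "0 \<le> Re (\<rho> j j)" using psd by metis
      then have "\<rho> j j = complex_of_real (cmod (\<rho> j j))" using im
        by (simp add: complex_eq_iff cmod_eq_Re)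
      then show ?thesis using True by simp
    next
      case False
      define w where "w = \<rho> j k * exp (\<i> * complex_of_real (\<beta>0 k - \<beta>0 j))"
      have cw: "cmod w = cmod (\<rho> j k)" unfolding w_def by (simp add: norm_mult)
      have "Re w = cmod w" using geq[OF jk] False cw unfolding g_def hh_def w_def by simp
      then have "w = complex_of_real (cmod (\<rho> j k))" using re_cmod_real cw by metis
      moreover have "\<rho> j k = w * exp (\<i> * complex_of_real (\<beta>0 j - \<beta>0 k))"
        unfolding w_def by (simp add: mult.assoc exp_add[symmetric] algebra_simps)
      ultimately show ?thesis by simp
    qed
    define fl where "fl = (\<lambda>j k. \<lfloor>(\<beta>0 j - \<beta>0 k) / (2 * pi)\<rfloor>)"
    define \<Theta> where "\<Theta> = (\<lambda>j k. (\<beta>0 j - \<beta>0 k) - 2 * pi * real_of_int (fl j k))"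
    show "\<exists>\<theta> :: nat \<Rightarrow> nat \<Rightarrow> real.
       (\<forall>j<d. \<forall>k<d. 0 \<le> \<theta> j k \<and> \<theta> j k \<le> 2 * pi \<and>
            \<rho> j k = complex_of_real (cmod (\<rho> j k)) * exp (\<i> * complex_of_real (\<theta> j k))) \<and>
       (\<forall>j<d. \<forall>p<d. \<forall>k<d. \<exists>n :: int. \<theta> j p + \<theta> p k = 2 * real_of_int n * pi + \<theta> j k)"
    proof (intro exI[of _ \<Theta>] conjI allI impI)
      fix j k assume jk: "j < d" "k < d"
      show "0 \<le> \<Theta> j k" "\<Theta> j k \<le> 2 * pi"
        using mod2pi_bounds[of "\<beta>0 j - \<beta>0 k"] unfolding \<Theta>_def fl_def by simp_all
      show "\<rho> j k = complex_of_real (cmod (\<rho> j k)) * exp (\<i> * complex_of_real (\<Theta> j k))"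
        unfolding \<Theta>_def exp_shift using rep[OF jk] .
    next
      fix j p k
      show "\<exists>n :: int. \<Theta> j p + \<Theta> p k = 2 * real_of_int n * pi + \<Theta> j k"
        by (rule exI[of _ "fl j k - fl j p - fl p k"]) (simp add: \<Theta>_def algebra_simps)
    qed
  next
    assume "\<exists>\<theta> :: nat \<Rightarrow> nat \<Rightarrow> real.
       (\<forall>j<d. \<forall>k<d. 0 \<le> \<theta> j k \<and> \<theta> j k \<le> 2 * pi \<and>
            \<rho> j k = complex_of_real (cmod (\<rho> j k)) * exp (\<i> * complex_of_real (\<theta> j k))) \<and>
       (\<forall>j<d. \<forall>p<d. \<forall>k<d. \<exists>n :: int. \<theta> j p + \<theta> p k = 2 * real_of_int n * pi + \<theta> j k)"
    then obtain \<Theta> where T1: "\<forall>j<d. \<forall>k<d. 0 \<le> \<Theta> j k \<and> \<Theta> j k \<le> 2 * pi \<and>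
            \<rho> j k = complex_of_real (cmod (\<rho> j k)) * exp (\<i> * complex_of_real (\<Theta> j k))"
      and T2: "\<forall>j<d. \<forall>p<d. \<forall>k<d. \<exists>n :: int. \<Theta> j p + \<Theta> p k = 2 * real_of_int n * pi + \<Theta> j k"
      by blast
    define \<beta> where "\<beta> = (\<lambda>k. 2 * pi - \<Theta> 0 k)"
    have br: "\<forall>j<d. 0 \<le> \<beta> j \<and> \<beta> j \<le> 2 * pi" unfolding \<beta>_def using T1 d0 by auto
    have gh: "g \<beta> j k = hh \<rho> j k" if jk: "j < d" "k < d" for j k
    proof (cases "j = k")
      case True then show ?thesis unfolding g_def hh_def by simp
    next
      case False
      obtain n where n: "\<Theta> 0 j + \<Theta> j k = 2 * real_of_int n * pi + \<Theta> 0 k"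
        using T2 d0 jk by blast
      have "\<rho> j k * exp (\<i> * complex_of_real (\<beta> k - \<beta> j))
          = complex_of_real (cmod (\<rho> j k)) * (exp (\<i> * complex_of_real (\<Theta> j k)) * exp (\<i> * complex_of_real (\<beta> k - \<beta> j)))"
      proof -
        have r: "\<rho> j k = complex_of_real (cmod (\<rho> j k)) * exp (\<i> * complex_of_real (\<Theta> j k))"
          using T1 jk by blast
        show ?thesis by (subst r) (simp only: mult.assoc)
      qed
      also have "exp (\<i> * complex_of_real (\<Theta> j k)) * exp (\<i> * complex_of_real (\<beta> k - \<beta> j))
          = exp (\<i> * complex_of_real (\<Theta> j k + \<beta> k - \<beta> j))"
        by (simp add: exp_add[symmetric] algebra_simps)
      also have "\<Theta> j k + \<beta> k - \<beta> j = 2 * real_of_int n * pi"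
        unfolding \<beta>_def using n by (simp add: algebra_simps)
      finally have "\<rho> j k * exp (\<i> * complex_of_real (\<beta> k - \<beta> j)) = complex_of_real (cmod (\<rho> j k))"
        by (simp only: exp_2npi) simp
      then show ?thesis unfolding g_def hh_def using False by simp
    qed
    have "F \<beta> * real d = B * real d"
      unfolding Fd Bd sh[symmetric] using gh by (intro sum.cong refl) auto
    then have FB: "F \<beta> = B" using d0 by simp
    have "F \<beta> \<le> coherence_fraction d \<rho>"
      unfolding coherence_fraction_def F_def by (rule cSUP_upper[OF mc2[OF br] bdd])
    then show "coherence_fraction d \<rho> = 1 / real d + C_l1 d \<rho> / real d"
      using CFle FB unfolding B_def by linarith
  qed
qed

end
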